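(* Let $p\ge1$ and $m\ge1$ be integers. Let $S=(S_1,S_2,\dots,S_N)$ be a finite sequence of words of length $m$ over $\{0,1\}$, each containing exactly one letter $1$; let $\sigma(b)$ denote the position of the $1$ in $S_b$. Suppose that for every position $s$ and every indices $a_1<a_2<\dots<a_p$ with $\sigma(a_1)=\dots=\sigma(a_p)=s$ there exists an index $b$ with $a_1<b<a_p$ and $\sigma(b)<s$. Then $N\le p^m-1$. *)

theory Defs
  imports Main
begin

definition one_hot_word :: "nat \<Rightarrow> nat list \<Rightarrow> bool" where
  "one_hot_word m w \<longleftrightarrow> length w = m \<and> set w \<subseteq> {0, 1} \<and> count_list w 1 = 1"

definition pos1 :: "nat list \<Rightarrow> nat" where
  "pos1 w = (THE i. i < length w \<and> w ! i = 1)"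

end

theory Submission
  imports Defs
begin

definition PP :: "nat \<Rightarrow> nat list \<Rightarrow> bool" where
  "PP p xs \<longleftrightarrow> (\<forall>s (a :: nat \<Rightarrow> nat).
           (strict_mono_on {0..<p} a \<and> (\<forall>i<p. a i < length xs \<and> xs ! a i = s))
           \<longrightarrow> (\<exists>b. a 0 < b \<and> b < a (p - 1) \<and> xs ! b < s))"

lemma count_card: "count_list xs v = card {i. i < length xs \<and> xs ! i = v}"
  by (simp add: count_list_eq_length_filter length_filter_conv_card eq_commute)

lemma PP_prefix:
  assumes "PP p (ys @ zs)" "p \<ge> 1" shows "PP p ys"
  unfolding PP_def
proof (intro allI impI)
  fix s and a :: "nat \<Rightarrow> nat"
  assume h: "strict_mono_on {0..<p} a \<and> (\<forall>i<p. a i < length ys \<and> ys ! a i = s)"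
  hence "strict_mono_on {0..<p} a \<and> (\<forall>i<p. a i < length (ys@zs) \<and> (ys@zs) ! a i = s)"
    by (auto simp: nth_append)
  then obtain b where b: "a 0 < b" "b < a (p - 1)" "(ys@zs) ! b < s"
    using assms(1) unfolding PP_def by blast
  have "a (p-1) < length ys" using h assms(2) by auto
  thus "\<exists>b. a 0 < b \<and> b < a (p - 1) \<and> ys ! b < s"
    using b by (intro exI[of _ b]) (auto simp: nth_append)
qed

lemma PP_suffix:
  assumes "PP p (ys @ zs)" "p \<ge> 1" shows "PP p zs"
  unfolding PP_def
proof (intro allI impI)
  fix s and a :: "nat \<Rightarrow> nat"
  assume h: "strict_mono_on {0..<p} a \<and> (\<forall>i<p. a i < length zs \<and> zs ! a i = s)"
  define a' where "a' = (\<lambda>i. a i + length ys)"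
  have "strict_mono_on {0..<p} a' \<and> (\<forall>i<p. a' i < length (ys@zs) \<and> (ys@zs) ! a' i = s)"
    using h unfolding a'_def strict_mono_on_def by (auto simp: nth_append)
  then obtain b where b: "a' 0 < b" "b < a' (p - 1)" "(ys@zs) ! b < s"
    using assms(1) unfolding PP_def by blast
  show "\<exists>b. a 0 < b \<and> b < a (p - 1) \<and> zs ! b < s"
    using b unfolding a'_def
    by (intro exI[of _ "b - length ys"]) (auto simp: nth_append)
qed

lemma count_bound:
  assumes "PP p xs" "p \<ge> 1" "\<forall>x\<in>set xs. lo \<le> x"
  shows "count_list xs lo < p"
proof (rule ccontr)
  assume "\<not> count_list xs lo < p"
  define I where "I = {i. i < length xs \<and> xs ! i = lo}"
  define L where "L = sorted_list_of_set I"
  have fin: "finite I" unfolding I_def by simp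
  have lenL: "length L = count_list xs lo" unfolding L_def I_def by (simp add: count_card)
  have setL: "set L = I" unfolding L_def using fin by simp
  have sw: "sorted_wrt (<) L" unfolding L_def by simp
  define a where "a = (\<lambda>i. L ! i)"
  have pL: "p \<le> length L" using lenL \<open>\<not> count_list xs lo < p\<close> by simp
  have sm: "strict_mono_on {0..<p} a"
    unfolding strict_mono_on_def a_def using sw pL
    by (auto intro: sorted_wrt_nth_less)
  have mem: "\<forall>i<p. a i < length xs \<and> xs ! a i = lo"
  proof (intro allI impI)
    fix i assume "i < p"
    hence "L ! i \<in> I" using pL setL nth_mem by (metis order_less_le_trans)
    thus "a i < length xs \<and> xs ! a i = lo" unfolding a_def I_def by simp
  qed
  then obtain b where b: "b < a (p-1)" "xs ! b < lo"
    using assms(1) sm unfolding PP_def by blast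
  have "a (p-1) < length xs" using mem assms(2) by simp
  hence "xs ! b \<in> set xs" using b by simp
  thus False using b assms(3) by fastforce
qed

lemma main_bound:
  assumes "p \<ge> 1"
  shows "\<forall>lo xs. (\<forall>x\<in>set xs. lo \<le> x \<and> x < lo + m) \<and> PP p xs \<longrightarrow> length xs + 1 \<le> p ^ m"
proof (induction m)
  case 0
  then show ?case by (auto simp: last_in_set) (metis last_in_set not_less)
next
  case (Suc m)
  note IHm = Suc.IH
  show ?case
  proof (intro allI impI)
    fix lo xs
    assume H: "(\<forall>x\<in>set xs. lo \<le> x \<and> x < lo + Suc m) \<and> PP p xs"
    have inner: "\<forall>xs. (\<forall>x\<in>set xs. lo \<le> x \<and> x < lo + Suc m) \<and> PP p xs \<and> count_list xs lo = c
          \<longrightarrow> length xs + 1 \<le> (c + 1) * p ^ m" for c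
    proof (induction c)
      case 0
      show ?case
      proof (intro allI impI)
        fix xs assume h: "(\<forall>x\<in>set xs. lo \<le> x \<and> x < lo + Suc m) \<and> PP p xs \<and> count_list xs lo = 0"
        hence "lo \<notin> set xs" by (simp add: count_list_0_iff)
        hence "\<forall>x\<in>set xs. Suc lo \<le> x \<and> x < Suc lo + m" using h
          by (metis Suc_leI add_Suc add_Suc_right le_neq_implies_less not_less_eq)
        thus "length xs + 1 \<le> (0 + 1) * p ^ m" using IHm[THEN spec[of _ "Suc lo"], THEN spec[of _ xs]] h by simp
      qed
    next
      case (Suc c)
      show ?case
      proof (intro allI impI)
        fix xs assume h: "(\<forall>x\<in>set xs. lo \<le> x \<and> x < lo + Suc m) \<and> PP p xs \<and> count_list xs lo = Suc c"
        hence "lo \<in> set xs" by (metis count_list_0_iff nat.distinct(1))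
        then obtain ys zs where sp: "xs = ys @ lo # zs" "lo \<notin> set zs"
          using split_list_last by metis
        have Pys: "PP p ys" using h sp PP_prefix assms by metis
        have Pzs: "PP p zs" using h sp PP_suffix[of p "ys @ [lo]" zs] assms by simp
        have cys: "count_list ys lo = c" using h sp by (simp add: count_list_append count_notin)
        have "length ys + 1 \<le> (c + 1) * p ^ m" using Suc.IH[THEN spec[of _ ys]] Pys cys h sp by simp
        moreover have "length zs + 1 \<le> p ^ m"
        proof -
          have "\<forall>x\<in>set zs. Suc lo \<le> x \<and> x < Suc lo + m" using h sp
            by (metis Suc_leI add_Suc add_Suc_right le_neq_implies_less not_less_eq set_append UnCI list.set_intros(2))
          thus ?thesis using IHm[THEN spec[of _ "Suc lo"], THEN spec[of _ zs]] Pzs by simp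
        qed
        ultimately show "length xs + 1 \<le> (Suc c + 1) * p ^ m" using sp by simp
      qed
    qed
    have cb: "count_list xs lo < p" using count_bound H assms by blast
    have "length xs + 1 \<le> (count_list xs lo + 1) * p ^ m" using inner H by blast
    also have "\<dots> \<le> p * p ^ m" using cb by (intro mult_right_mono) auto
    finally show "length xs + 1 \<le> p ^ Suc m" by simp
  qed
qed

lemma pos1_lt:
  assumes "one_hot_word m w" shows "pos1 w < m"
proof -
  have c: "card {i. i < length w \<and> w ! i = 1} = 1" and l: "length w = m"
    using assms unfolding one_hot_word_def by (auto simp: count_card)
  then obtain i where "{i. i < length w \<and> w ! i = 1} = {i}" using card_1_singletonE by blast
  hence "\<And>j. (j < length w \<and> w ! j = 1) \<longleftrightarrow> j = i" by blast
  hence "pos1 w = i" unfolding pos1_def by (simp add: the_equality)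
  moreover have "i < length w" using \<open>\<And>j. _ \<longleftrightarrow> j = i\<close> by blast
  ultimately show ?thesis using l by simp
qed

theorem lemmac:
  fixes p m :: nat and S :: "nat list list"
  assumes "p \<ge> 1" and "m \<ge> 1"
    and "\<forall>w \<in> set S. one_hot_word m w"
    and "\<forall>s (a :: nat \<Rightarrow> nat).
           (strict_mono_on {0..<p} a \<and> (\<forall>i<p. a i < length S \<and> pos1 (S ! a i) = s))
           \<longrightarrow> (\<exists>b. a 0 < b \<and> b < a (p - 1) \<and> pos1 (S ! b) < s)"
  shows "length S \<le> p ^ m - 1"
proof -
  define xs where "xs = map pos1 S"
  have P: "PP p xs"
    unfolding PP_def
  proof (intro allI impI)
    fix s and a :: "nat \<Rightarrow> nat"
    assume h: "strict_mono_on {0..<p} a \<and> (\<forall>i<p. a i < length xs \<and> xs ! a i = s)"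
    hence "strict_mono_on {0..<p} a \<and> (\<forall>i<p. a i < length S \<and> pos1 (S ! a i) = s)"
      unfolding xs_def by auto
    then obtain b where b: "a 0 < b" "b < a (p - 1)" "pos1 (S ! b) < s" using assms(4) by blast
    have "a (p-1) < length S" using h assms(1) unfolding xs_def by simp
    thus "\<exists>b. a 0 < b \<and> b < a (p - 1) \<and> xs ! b < s"
      using b unfolding xs_def by (intro exI[of _ b]) simp
  qed
  have "\<forall>x\<in>set xs. 0 \<le> x \<and> x < 0 + m" using assms(3) pos1_lt unfolding xs_def by auto
  hence "length xs + 1 \<le> p ^ m" using main_bound[OF assms(1)] P by blast
  thus ?thesis unfolding xs_def by simp
qed

end
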